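(* For every positive integer $k$, \[ \sum_{i+t\le\lfloor k/2\rfloor}B_{2t}\,2^{2t}\binom{2k+2}{2t,\;2i+1,\;2k-2t-2i+1}=(k+1)\left(2^{2k}+(-1)^k\binom{2k}{k}\right), \] where the sum ranges over all pairs of nonnegative integers $i,t$ with $i+t\le\lfloor k/2\rfloor$.
   Context: The Bernoulli numbers $B_m$ ($m\ge 0$) are defined by $\dfrac{x}{e^x-1}=\sum_{m=0}^\infty B_m\dfrac{x^m}{m!}$. The trinomial coefficient is $\binom{n}{r_1,r_2,r_3}=\dfrac{n!}{r_1!\,r_2!\,r_3!}$ for nonnegative integers $r_1+r_2+r_3=n$. *)

theory Defs
  imports Complex_Main "HOL-Computational_Algebra.Formal_Power_Series"
begin

definition bernoulli :: "nat \<Rightarrow> real" where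
  "bernoulli m = fact m * fps_nth (fps_X / (fps_exp 1 - 1)) m"

definition trinomial :: "nat \<Rightarrow> nat \<Rightarrow> nat \<Rightarrow> nat \<Rightarrow> nat" where
  "trinomial n r1 r2 r3 = fact n div (fact r1 * fact r2 * fact r3)"

end

theory Submission imports Defs begin
unbundle fps_syntax

definition sc :: "real \<Rightarrow> real fps \<Rightarrow> real fps" where
  "sc c f = Abs_fps (\<lambda>n. c^n * f $ n)"

lemma sc_nth[simp]: "sc c f $ n = c^n * f $ n" by (simp add: sc_def)

lemma sc_mult: "sc c (f*g) = sc c f * sc c g"
proof (rule fps_ext)
  fix n
  have "sc c (f*g) $ n = (\<Sum>i=0..n. c^i * f $ i * (c^(n-i) * g $ (n-i)))"
    by (simp add: fps_mult_nth sum_distrib_left algebra_simps power_add[symmetric])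
  then show "sc c (f*g) $ n = (sc c f * sc c g) $ n" by (simp add: fps_mult_nth)
qed

lemma sc_add: "sc c (f+g) = sc c f + sc c g" by (rule fps_ext) (simp add: algebra_simps)
lemma sc_diff: "sc c (f-g) = sc c f - sc c g" by (rule fps_ext) (simp add: algebra_simps)
lemma sc_one: "sc c 1 = 1" by (rule fps_ext) simp
lemma sc_X: "sc c fps_X = fps_const c * fps_X" by (rule fps_ext) (auto simp: le_Suc_eq)
lemma sc_exp: "sc c (fps_exp a) = fps_exp (c*a)" by (rule fps_ext) (simp add: power_mult_distrib)
lemma sc_sc: "sc a (sc c f) = sc (a*c) f" by (rule fps_ext) (simp add: power_mult_distrib)

definition bb :: "real fps" where "bb = fps_X / (fps_exp 1 - 1)"

lemma bernoulli_bb: "bernoulli m = fact m * bb $ m"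
  by (simp add: bernoulli_def bb_def)

lemma exp_minus1_ne: "fps_exp (1::real) - 1 \<noteq> 0"
proof
  assume "fps_exp (1::real) - 1 = 0"
  hence "(fps_exp (1::real) - 1) $ 1 = 0" by simp
  thus False by simp
qed

lemma bb_eq: "bb * (fps_exp 1 - 1) = fps_X"
  unfolding bb_def
proof (rule fps_times_divide_eq[OF exp_minus1_ne])
  have "subdegree (fps_exp (1::real) - 1) = 1"
    by (rule subdegreeI) (auto)
  thus "subdegree (fps_exp (1::real) - 1) \<le> subdegree (fps_X::real fps)" by simp
qed

lemma E_Em: "fps_exp (1::real) * fps_exp (-1) = 1"
  by (metis fps_exp_add_mult add.right_inverse fps_exp_eq_1_iff)

lemma one_minus_E_ne: "1 - fps_exp (1::real) \<noteq> 0"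
  using exp_minus1_ne by (metis diff_self eq_iff_diff_eq_0)

lemma bb_neg: "sc (-1) bb = bb + fps_X"
proof -
  define E where "E = fps_exp (1::real)"
  define Em where "Em = fps_exp (-1::real)"
  have EEm: "E * Em = 1" using E_Em by (simp add: E_def Em_def)
  have b: "bb * (E - 1) = fps_X" using bb_eq by (simp add: E_def)
  have "sc (-1) (bb * (E - 1)) = sc (-1) fps_X" using b by simp
  hence "sc (-1) bb * (Em - 1) = fps_const (-1) * fps_X"
    by (simp add: sc_mult sc_diff sc_one sc_X sc_exp E_def Em_def)
  also have "fps_const (-1) * fps_X = - (fps_X :: real fps)"
    by (metis fps_const_neg fps_const_1_eq_1 mult_minus1)
  finally have b2: "sc (-1) bb * (Em - 1) = - fps_X" .
  have "sc (-1) bb * (1 - E) = sc (-1) bb * (Em - 1) * E"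
    using EEm by (simp add: algebra_simps)
  also have "\<dots> = - fps_X * E" using b2 by simp
  also have "\<dots> = (bb + fps_X) * (1 - E)"
    using b by (simp add: algebra_simps)
  finally have "sc (-1) bb * (1 - E) = (bb + fps_X) * (1 - E)" .
  thus ?thesis using one_minus_E_ne by (simp add: E_def)
qed

definition D :: "real fps" where "D = sc 2 bb + fps_X"

lemma fc2: "fps_const (2::real) * f = f + f"
  by (metis fps_const_add fps_const_1_eq_1 distrib_right mult_1 one_add_one)

lemma D_neg: "sc (-1) D = D"
proof -
  have "sc (-1) D = sc (-1) (sc 2 bb) + sc (-1) fps_X" by (simp add: D_def sc_add)
  also have "sc (-1) (sc 2 bb) = sc 2 (sc (-1) bb)" by (simp add: sc_sc)
  also have "\<dots> = sc 2 bb + fps_const 2 * fps_X" by (simp add: bb_neg sc_add sc_X)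
  also have "sc (-1) fps_X = - fps_X"
    by (simp add: sc_X) (metis fps_const_neg fps_const_1_eq_1 mult_minus1)
  finally show ?thesis by (simp add: D_def fc2)
qed

lemma E2: "fps_exp (1::real) * fps_exp 1 = fps_exp 2"
  by (metis fps_exp_add_mult one_add_one)

lemma D_eq: "D * (fps_exp 2 - 1) = fps_X * (fps_exp 2 + 1)"
proof -
  have "sc 2 (bb * (fps_exp 1 - 1)) = sc 2 fps_X" by (simp add: bb_eq)
  hence h: "sc 2 bb * (fps_exp 2 - 1) = fps_X + fps_X"
    by (simp add: sc_mult sc_diff sc_one sc_X sc_exp fc2)
  show ?thesis unfolding D_def using h by (simp add: algebra_simps)
qed

lemma g_odd: "D * fps_exp 1 - D * fps_exp (-1) = fps_X * (fps_exp 1 + fps_exp (-1))"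
proof -
  define E where "E = fps_exp (1::real)"
  define Em where "Em = fps_exp (-1::real)"
  have EEm: "E * Em = 1" using E_Em by (simp add: E_def Em_def)
  have "(D * E - D * Em) * E = D * (E*E - 1)" using EEm by (simp add: algebra_simps)
  also have "\<dots> = fps_X * (E*E + 1)" using D_eq E2 by (simp add: E_def)
  also have "\<dots> = fps_X * (E + Em) * E" using EEm by (simp add: algebra_simps)
  finally have "(D * E - D * Em) * E = fps_X * (E + Em) * E" .
  moreover have "E \<noteq> 0" by (simp add: E_def)
  ultimately show ?thesis by (simp add: E_def Em_def)
qed

lemma D_odd: "odd j \<Longrightarrow> D $ j = 0"
proof -
  assume "odd j"
  have "sc (-1) D $ j = D $ j" by (simp add: D_neg)
  thus ?thesis using \<open>odd j\<close> by simp
qed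

lemma D_even: "D $ (2*t) = 4^t * bb $ (2*t)"
  by (simp add: D_def power_mult)

lemma g_coeff:
  assumes "odd u"
  shows "(D * fps_exp 1) $ u = 1 / fact (u - 1)"
proof -
  have u0: "u > 0" using assms by (auto intro: Nat.gr0I)
  have "sc (-1) (D * fps_exp 1) = D * fps_exp (-1)" by (simp add: sc_mult D_neg sc_exp)
  hence "(D * fps_exp (-1)) $ u = (-1)^u * (D * fps_exp 1) $ u"
    by (metis sc_nth)
  hence m: "(D * fps_exp (-1)) $ u = - (D * fps_exp 1) $ u"
    using assms by simp
  have "(D * fps_exp 1 - D * fps_exp (-1)) $ u = (fps_X * (fps_exp 1 + fps_exp (-1))) $ u"
    by (simp only: g_odd)
  also have "\<dots> = (fps_exp 1 + fps_exp (-1)) $ (u-1)"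
    using u0 by (simp only: fps_X_mult_nth) simp
  also have "\<dots> = 1 / fact (u-1) + (-1)^(u-1) / fact (u-1)"
    by (simp only: fps_add_nth fps_exp_nth power_one of_nat_fact)
  also have "(-1::real)^(u-1) = 1" using assms u0 by (simp add: neg_one_even_power)
  finally show ?thesis using m by (simp add: field_simps)
qed

lemma evsum:
  fixes s :: nat and f :: "nat \<Rightarrow> real"
  assumes "\<And>j. odd j \<Longrightarrow> f j = (0::real)"
  shows "(\<Sum>j\<le>2*s+1. f j) = (\<Sum>t\<le>s. f (2*t))"
proof (induction s)
  case 0
  then show ?case using assms[of 1] by (simp add: atMost_Suc)
next
  case (Suc s)
  have e: "2 * Suc s + 1 = Suc (Suc (2*s+1))" by simp
  have "(\<Sum>j\<le>2*Suc s+1. f j) = (\<Sum>j\<le>2*s+1. f j) + f (2*s+2) + f (2*s+3)"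
    unfolding e by (simp add: sum.atMost_Suc add.assoc numeral_3_eq_3)
  also have "f (2*s+3) = 0" using assms[of "2*s+3"] by simp
  finally show ?case using Suc by simp
qed

lemma inner_D: "(\<Sum>t\<le>s. D $ (2*t) / fact (2*s+1-2*t)) = 1 / fact (2*s)"
proof -
  have "(D * fps_exp 1) $ (2*s+1) = (\<Sum>j\<le>2*s+1. D $ j / fact (2*s+1-j))"
    by (simp add: fps_mult_nth atLeast0AtMost divide_inverse)
  also have "\<dots> = (\<Sum>t\<le>s. D $ (2*t) / fact (2*s+1-2*t))"
    by (rule evsum) (simp add: D_odd)
  finally show ?thesis using g_coeff[of "2*s+1"] by simp
qed

lemma tri_real:
  assumes "r1 + r2 + r3 = n"
  shows "real (trinomial n r1 r2 r3) = fact n / (fact r1 * fact r2 * fact r3)"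
proof -
  have "fact r1 * fact r2 dvd (fact (r1+r2) :: nat)" by (rule fact_fact_dvd_fact)
  hence "fact r1 * fact r2 * fact r3 dvd (fact (r1+r2) * fact r3 :: nat)" by (rule mult_dvd_mono) simp
  also have "(fact (r1+r2) * fact r3 :: nat) dvd fact n" using assms fact_fact_dvd_fact[of "r1+r2" r3] by simp
  finally have d: "fact r1 * fact r2 * fact r3 dvd (fact n :: nat)" .
  show ?thesis unfolding trinomial_def using d
    by (simp add: real_of_nat_div of_nat_fact)
qed

lemma pascal_sum: "(\<Sum>s\<le>m. Suc N choose (2*s)) = (\<Sum>v\<le>2*m. N choose v)"
proof (induction m)
  case 0 then show ?case by simp
next
  case (Suc m)
  have e: "2 * Suc m = Suc (Suc (2*m))" by simp
  have "(\<Sum>s\<le>Suc m. Suc N choose (2*s)) = (\<Sum>s\<le>m. Suc N choose (2*s)) + (Suc N choose (2*Suc m))"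
    by (rule sum.atMost_Suc)
  also have "\<dots> = (\<Sum>v\<le>2*m. N choose v) + (N choose Suc (2*m)) + (N choose Suc (Suc (2*m)))"
    using Suc.IH unfolding e by (simp only: binomial_Suc_Suc add.assoc)
  also have "\<dots> = (\<Sum>v\<le>Suc (Suc (2*m)). N choose v)" by (simp only: sum.atMost_Suc)
  finally show ?case unfolding e .
qed

lemma half_sum: "2 * (\<Sum>v<k. (2*k) choose v) + ((2*k) choose k) = 4^k"
proof -
  have r: "(\<Sum>v\<in>{Suc k..2*k}. (2*k) choose v) = (\<Sum>v<k. (2*k) choose v)"
    by (rule sum.reindex_bij_witness[where i="\<lambda>v. 2*k - v" and j="\<lambda>v. 2*k - v"])
       (auto simp: binomial_symmetric[symmetric])
  have u: "{..2*k} = {..k} \<union> {Suc k..2*k}" by auto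
  have "(4::nat)^k = 2^(2*k)" by (simp add: power_mult)
  also have "\<dots> = (\<Sum>v\<le>2*k. (2*k) choose v)" by (simp add: choose_row_sum)
  also have "\<dots> = (\<Sum>v\<le>k. (2*k) choose v) + (\<Sum>v\<in>{Suc k..2*k}. (2*k) choose v)"
    unfolding u by (rule sum.union_disjoint) auto
  also have "(\<Sum>v\<le>k. (2*k) choose v) = (\<Sum>v<k. (2*k) choose v) + ((2*k) choose k)"
    by (simp add: lessThan_Suc_atMost[symmetric])
  finally show ?thesis using r by simp
qed

lemma comb_final:
  assumes "k \<ge> 1"
  shows "(\<Sum>s\<le>k div 2. real (2*k+2) * real ((2*k+1) choose (2*s)))
         = real (k + 1) * (2 ^ (2 * k) + (-1) ^ k * real (2 * k choose k))"
proof -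
  have "(\<Sum>s\<le>k div 2. real (2*k+2) * real ((2*k+1) choose (2*s)))
      = real (2*k+2) * real (\<Sum>s\<le>k div 2. Suc (2*k) choose (2*s))"
    by (simp only: sum_distrib_left of_nat_sum Suc_eq_plus1)
  also have "\<dots> = real (2*k+2) * real (\<Sum>v\<le>2*(k div 2). (2*k) choose v)"
    by (simp only: pascal_sum)
  also have "\<dots> = real (k + 1) * (2 ^ (2 * k) + (-1) ^ k * real (2 * k choose k))"
  proof (cases "even k")
    case True
    hence e: "2*(k div 2) = k" by simp
    have "2 * (\<Sum>v\<le>k. (2*k) choose v) = 4^k + ((2*k) choose k)"
      using half_sum[of k] by (simp add: lessThan_Suc_atMost[symmetric])
    hence "2 * real (\<Sum>v\<le>k. (2*k) choose v) = 4^k + real ((2*k) choose k)"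
      by (metis of_nat_add of_nat_mult of_nat_numeral of_nat_power)
    hence H: "2 * real (\<Sum>v\<le>k. (2*k) choose v) = 4^k + real ((2*k) choose k)" .
    have p: "(2::real)^(2*k) = 4^k" by (simp add: power_mult)
    have sg: "(-1::real)^k = 1" using True by simp
    have "real (2*k+2) * real (\<Sum>v\<le>k. (2*k) choose v) = real (k+1) * (2 * real (\<Sum>v\<le>k. (2*k) choose v))"
      by simp
    thus ?thesis unfolding e H p sg by simp
  next
    case False
    hence e1: "2*(k div 2) = k - 1" by (simp add: odd_two_times_div_two_nat)
    have e: "{..2*(k div 2)} = {..<k}" unfolding e1 using assms by auto
    have "2 * real (\<Sum>v<k. (2*k) choose v) + real ((2*k) choose k) = 4^k"
      using half_sum[of k] by (metis of_nat_add of_nat_mult of_nat_numeral of_nat_power)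
    hence H: "2 * real (\<Sum>v<k. (2*k) choose v) = 4^k - real ((2*k) choose k)" by linarith
    have p: "(2::real)^(2*k) = 4^k" by (simp add: power_mult)
    have sg: "(-1::real)^k = -1" using False by simp
    have "real (2*k+2) * real (\<Sum>v<k. (2*k) choose v) = real (k+1) * (2 * real (\<Sum>v<k. (2*k) choose v))"
      by simp
    thus ?thesis unfolding e H p sg by simp
  qed
  finally show ?thesis .
qed

lemma inner_F:
  assumes "2*s \<le> k"
  shows "(\<Sum>t\<le>s. bernoulli (2*t) * 2^(2*t) *
            real (trinomial (2*k+2) (2*t) (2*(s-t)+1) (2*k - 2*t - 2*(s-t) + 1)))
         = real (2*k+2) * real ((2*k+1) choose (2*s))"
proof -
  have tm: "bernoulli (2*t) * 2^(2*t) *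
            real (trinomial (2*k+2) (2*t) (2*(s-t)+1) (2*k - 2*t - 2*(s-t) + 1))
      = fact (2*k+2) / fact (2*k+1-2*s) * (D $ (2*t) / fact (2*s+1-2*t))" if "t \<le> s" for t
  proof -
    have a1: "2*(s-t)+1 = 2*s+1-2*t" using that by simp
    have a2: "2*k - 2*t - 2*(s-t) + 1 = 2*k+1-2*s" using that assms by simp
    have tr: "real (trinomial (2*k+2) (2*t) (2*s+1-2*t) (2*k+1-2*s))
        = fact (2*k+2) / (fact (2*t) * fact (2*s+1-2*t) * fact (2*k+1-2*s))"
      by (rule tri_real) (use that assms in simp)
    have d: "D $ (2*t) = 2^(2*t) * bb $ (2*t)" by (simp add: D_even power_mult)
    show ?thesis unfolding a1 a2 tr d bernoulli_bb
      by (simp add: field_simps)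
  qed
  have "(\<Sum>t\<le>s. bernoulli (2*t) * 2^(2*t) *
            real (trinomial (2*k+2) (2*t) (2*(s-t)+1) (2*k - 2*t - 2*(s-t) + 1)))
      = (\<Sum>t\<le>s. fact (2*k+2) / fact (2*k+1-2*s) * (D $ (2*t) / fact (2*s+1-2*t)))"
    by (rule sum.cong[OF refl], rule tm) simp
  also have "\<dots> = fact (2*k+2) / fact (2*k+1-2*s) * (1 / fact (2*s))"
    by (simp only: sum_distrib_left[symmetric] inner_D)
  also have "\<dots> = real (2*k+2) * real ((2*k+1) choose (2*s))"
  proof -
    have b: "real ((2*k+1) choose (2*s)) = fact (2*k+1) / (fact (2*s) * fact (2*k+1-2*s))"
      by (rule binomial_fact) (use assms in simp)
    have f: "(fact (2*k+2) :: real) = real (2*k+2) * fact (2*k+1)"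
      by (metis add_Suc_right fact_Suc nat_1_add_1 of_nat_fact of_nat_mult plus_1_eq_Suc add.commute)
    show ?thesis unfolding b f by (simp add: field_simps)
  qed
  finally show ?thesis .
qed

theorem lemma1:
  fixes k :: nat
  assumes "k \<ge> 1"
  shows "(\<Sum>(i, t) \<in> {(i, t). i + t \<le> k div 2}.
            bernoulli (2 * t) * 2 ^ (2 * t) *
            real (trinomial (2 * k + 2) (2 * t) (2 * i + 1) (2 * k - 2 * t - 2 * i + 1)))
         = real (k + 1) * (2 ^ (2 * k) + (-1) ^ k * real (2 * k choose k))"
proof -
  define m where "m = k div 2"
  define F where "F = (\<lambda>i t. bernoulli (2 * t) * 2 ^ (2 * t) *
            real (trinomial (2 * k + 2) (2 * t) (2 * i + 1) (2 * k - 2 * t - 2 * i + 1)))"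
  have inj: "inj_on (\<lambda>(s,t). (s-t, t::nat)) (SIGMA s:{..m}. {..s})"
    by (auto simp: inj_on_def)
  have eqset: "{(i, t). i + t \<le> m} = (\<lambda>(s,t). (s-t, t::nat)) ` (SIGMA s:{..m}. {..s})"
  proof (rule set_eqI, rule iffI)
    fix x assume "x \<in> {(i, t). i + t \<le> m}"
    then obtain i t where x: "x = (i,t)" "i + t \<le> m" by auto
    hence "(i+t, t) \<in> (SIGMA s:{..m}. {..s})" by auto
    moreover have "x = (\<lambda>(s,t). (s-t, t::nat)) (i+t, t)" using x by simp
    ultimately show "x \<in> (\<lambda>(s,t). (s-t, t::nat)) ` (SIGMA s:{..m}. {..s})" by blast
  qed auto
  have "(\<Sum>(i, t) \<in> {(i, t). i + t \<le> m}. F i t) = (\<Sum>(s, t) \<in> (SIGMA s:{..m}. {..s}). F (s-t) t)"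
    by (rule sum.reindex_cong[OF inj eqset]) auto
  also have "\<dots> = (\<Sum>s\<le>m. \<Sum>t\<le>s. F (s-t) t)"
    by (simp add: sum.Sigma)
  also have "\<dots> = (\<Sum>s\<le>m. real (2*k+2) * real ((2*k+1) choose (2*s)))"
  proof (rule sum.cong[OF refl])
    fix s assume "s \<in> {..m}"
    hence "2*s \<le> k" by (auto simp: m_def)
    thus "(\<Sum>t\<le>s. F (s-t) t) = real (2*k+2) * real ((2*k+1) choose (2*s))"
      unfolding F_def by (rule inner_F)
  qed
  also have "\<dots> = real (k + 1) * (2 ^ (2 * k) + (-1) ^ k * real (2 * k choose k))"
    unfolding m_def by (rule comb_final[OF assms])
  finally show ?thesis unfolding F_def m_def .
qed

end
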